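(* Let $p$ be prime, $\mathbb{F}=\mathbb{F}_p$, $n\ge1$. Let $r_1,\dots,r_n$ be chosen uniformly and independently from $\mathbb{F}^N$. For each nonzero sequence $\kappa=(k_1,\dots,k_n)$ with $0\le k_i<p$, let $X_\kappa=\sum_{j=1}^N\prod_{i=1}^nr_i(j)^{k_i}$, and let $X=(X_\kappa)_\kappa\in\mathbb{F}^{K}$, $K=p^n-1$. Let $P$ be the distribution of $X$ and $U$ the uniform distribution on $\mathbb{F}^K$. Then there are constants $c>0$ and $N_0$ depending on $n,p$ but not on $N$ such that for all $N\ge N_0$, $$\|P-U\|_1\le\exp\{-cN\}.$$
   Context: $\|\cdot\|_1$ is the statistical ($\ell_1$) distance between distributions on $\mathbb{F}^K$; $r(j)$ is the $j$-th coordinate of $r$. *)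

theory Defs
  imports "HOL-Probability.Probability"
begin

text \<open>Elements of F_p are represented by naturals in {0..<p}; arithmetic is taken mod p.
  The n vectors r_1..r_N in F^N are encoded as one function r on index pairs (i,j),
  i < n (vector index, 0-based), j < N (coordinate, 0-based), r(i,j) = r_{i+1}(j+1).\<close>

definition exps :: "nat \<Rightarrow> nat \<Rightarrow> (nat \<Rightarrow> nat) set" where
  "exps p n = (PiE {0..<n} (\<lambda>_. {0..<p})) - {restrict (\<lambda>_. 0) {0..<n}}"

definition samples :: "nat \<Rightarrow> nat \<Rightarrow> nat \<Rightarrow> (nat \<times> nat \<Rightarrow> nat) set" where
  "samples p n N = PiE ({0..<n} \<times> {0..<N}) (\<lambda>_. {0..<p})"

definition Xvec :: "nat \<Rightarrow> nat \<Rightarrow> nat \<Rightarrow> (nat \<times> nat \<Rightarrow> nat) \<Rightarrow> ((nat \<Rightarrow> nat) \<Rightarrow> nat)" where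
  "Xvec p n N r = restrict (\<lambda>\<kappa>. (\<Sum>j<N. \<Prod>i<n. r (i, j) ^ \<kappa> i) mod p) (exps p n)"

definition target :: "nat \<Rightarrow> nat \<Rightarrow> ((nat \<Rightarrow> nat) \<Rightarrow> nat) set" where
  "target p n = PiE (exps p n) (\<lambda>_. {0..<p})"

definition distP :: "nat \<Rightarrow> nat \<Rightarrow> nat \<Rightarrow> ((nat \<Rightarrow> nat) \<Rightarrow> nat) pmf" where
  "distP p n N = map_pmf (Xvec p n N) (pmf_of_set (samples p n N))"

definition distU :: "nat \<Rightarrow> nat \<Rightarrow> ((nat \<Rightarrow> nat) \<Rightarrow> nat) pmf" where
  "distU p n = pmf_of_set (target p n)"

definition l1_dist :: "nat \<Rightarrow> nat \<Rightarrow> nat \<Rightarrow> real" where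
  "l1_dist p n N = (\<Sum>x\<in>target p n. \<bar>pmf (distP p n N) x - pmf (distU p n) x\<bar>)"

end

theory Submission
  imports Defs "HOL-Number_Theory.Number_Theory"
begin



lemma psum_nodvd:
  fixes p e :: nat
  assumes pp: "prime p" and nd: "\<not> (p - 1) dvd e"
  shows "[(\<Sum>x<p. x ^ e) = 0] (mod p)"
proof -
  have p1: "p > 1" using pp prime_gt_1_nat by blast
  obtain g where g: "residue_primroot p g" using prime_primitive_root_exists[OF p1 pp] by blast
  have cop: "coprime p g" and og: "ord p g = p - 1"
    using g pp by (auto simp: residue_primroot_def totient_prime)
  define S where "S = (\<Sum>x<p. x ^ e)"
  have inj: "inj_on (\<lambda>x. (g * x) mod p) {..<p}"
  proof (rule inj_onI)
    fix x y assume x: "x \<in> {..<p}" and y: "y \<in> {..<p}" and h: "(g * x) mod p = (g * y) mod p"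
    then have "[g * x = g * y] (mod p)" by (simp add: cong_def)
    then have "[x = y] (mod p)" using cop by (metis cong_mult_lcancel_nat coprime_commute)
    then show "x = y" using x y cong_less_modulus_unique_nat by auto
  qed
  have img: "(\<lambda>x. (g * x) mod p) ` {..<p} = {..<p}"
    using p1 inj by (intro endo_inj_surj) auto
  have bij: "(\<Sum>x<p. ((g * x) mod p) ^ e) = S"
    unfolding S_def using sum.reindex[OF inj, of "\<lambda>x. x ^ e"] img by simp
  have "[(\<Sum>x<p. ((g * x) mod p) ^ e) = (\<Sum>x<p. g ^ e * x ^ e)] (mod p)"
    by (rule cong_sum) (simp add: cong_def power_mod power_mult_distrib)
  moreover have "(\<Sum>x<p. g ^ e * x ^ e) = g ^ e * S" by (simp add: S_def sum_distrib_left)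
  ultimately have c1: "[S = g ^ e * S] (mod p)" using bij by simp
  have "[g ^ e * S = S] (mod p)" using c1 by (rule cong_sym)
  then have "[int (g ^ e * S) = int S] (mod int p)" by (simp only: cong_int_iff)
  then have "int p dvd int (g ^ e * S) - int S" by (simp only: cong_iff_dvd_diff)
  then have "int p dvd (int (g ^ e) - 1) * int S" by (simp add: algebra_simps)
  moreover have "prime (int p)" using pp by simp
  ultimately have "int p dvd int (g ^ e) - 1 \<or> int p dvd int S"
    by (simp add: prime_dvd_mult_iff)
  moreover have "\<not> int p dvd int (g ^ e) - 1"
  proof
    assume "int p dvd int (g ^ e) - 1"
    then have "[int (g ^ e) = int 1] (mod int p)" by (simp add: cong_iff_dvd_diff)
    then have "[g ^ e = 1] (mod p)" using cong_int_iff by blast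
    then show False using og nd ord_divides[of g e p] by simp
  qed
  ultimately have "int p dvd int S" by blast
  then have "p dvd S" by (simp only: int_dvd_int_iff)
  then show ?thesis unfolding S_def by (simp add: cong_0_iff)
qed

lemma psum_dvd:
  fixes p e :: nat
  assumes pp: "prime p" and e1: "e \<ge> 1" and d: "(p - 1) dvd e"
  shows "[(\<Sum>x<p. x ^ e) = p - 1] (mod p)"
proof -
  have p1: "p > 1" using pp prime_gt_1_nat by blast
  obtain q where q: "e = (p - 1) * q" using d by blast
  have "{..<p} = insert 0 {1..<p}" using p1 by auto
  then have "(\<Sum>x<p. x ^ e) = 0 ^ e + (\<Sum>x\<in>{1..<p}. x ^ e)" by simp
  also have "\<dots> = (\<Sum>x\<in>{1..<p}. x ^ e)" using e1 by simp
  finally have s: "(\<Sum>x<p. x ^ e) = (\<Sum>x\<in>{1..<p}. x ^ e)" .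
  have "[(\<Sum>x\<in>{1..<p}. x ^ e) = (\<Sum>x\<in>{1..<p}. 1)] (mod p)"
  proof (rule cong_sum)
    fix x assume x: "x \<in> {1..<p}"
    then have "\<not> p dvd x" by (auto dest: dvd_imp_le)
    then have "[x ^ (p - 1) = 1] (mod p)" using fermat_theorem pp by blast
    then have "[(x ^ (p - 1)) ^ q = 1 ^ q] (mod p)" by (rule cong_pow)
    then show "[x ^ e = 1] (mod p)" by (simp add: q power_mult)
  qed
  then show ?thesis using s by simp
qed

lemma psum_int:
  fixes p e :: nat
  assumes pp: "prime p"
  shows "[(\<Sum>x<p. (int x) ^ e) = (if e \<ge> 1 \<and> (p - 1) dvd e then -1 else 0)] (mod int p)"
proof -
  have p1: "p > 1" using pp prime_gt_1_nat by blast
  have eq: "(\<Sum>x<p. (int x) ^ e) = int (\<Sum>x<p. x ^ e)" by simp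
  show ?thesis
  proof (cases "e \<ge> 1 \<and> (p - 1) dvd e")
    case True
    have "[(\<Sum>x<p. x ^ e) = p - 1] (mod p)" using True psum_dvd[OF pp] by blast
    then have a: "[int (\<Sum>x<p. x ^ e) = int (p - 1)] (mod int p)" by (simp only: cong_int_iff)
    have i: "int (p - 1) = int p - 1" using p1 by simp
    have "[int p - 1 = -1] (mod int p)" by (simp only: cong_iff_dvd_diff) simp
    then have b: "[int (p - 1) = -1] (mod int p)" by (simp only: i)
    have "[(\<Sum>x<p. (int x) ^ e) = -1] (mod int p)"
      unfolding eq by (rule cong_trans[OF a b])
    then show ?thesis using True by (simp only: True simp_thms if_True)
  next
    case False
    show ?thesis
    proof (cases "e = 0")
      case True
      have "(\<Sum>x<p. (int x) ^ e) = int p" using True by simp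
      moreover have "[int p = 0] (mod int p)" by (simp only: cong_0_iff) simp
      ultimately show ?thesis unfolding if_not_P[OF False] by simp
    next
      case e0: False
      then have "\<not> (p - 1) dvd e" using False by simp
      then have "[(\<Sum>x<p. x ^ e) = 0] (mod p)" using psum_nodvd[OF pp] by blast
      then have "[int (\<Sum>x<p. x ^ e) = int 0] (mod int p)" by (simp only: cong_int_iff)
      then show ?thesis unfolding eq if_not_P[OF False] by simp
    qed
  qed
qed




definition fdual :: "nat \<Rightarrow> nat \<Rightarrow> int \<Rightarrow> int" where
  "fdual p k0 x = (if k0 = 0 then 1 - x ^ (p - 1) else - (x ^ (p - 1 - k0)))"

lemma exp_aux:
  fixes p k k0 :: nat
  assumes "p \<ge> 2" "1 \<le> k0" "k0 < p" "k < p"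
  shows "(1 \<le> k + (p - 1 - k0) \<and> (p - 1) dvd (k + (p - 1 - k0))) \<longleftrightarrow> k = k0"
proof
  assume "k = k0" then show "1 \<le> k + (p - 1 - k0) \<and> (p - 1) dvd (k + (p - 1 - k0))"
    using assms by simp
next
  assume h: "1 \<le> k + (p - 1 - k0) \<and> (p - 1) dvd (k + (p - 1 - k0))"
  then obtain q where q: "k + (p - 1 - k0) = (p - 1) * q" by blast
  have "q \<noteq> 0" using h q by auto
  moreover have "\<not> q \<ge> 2"
  proof
    assume "q \<ge> 2"
    then have "(p - 1) * 2 \<le> (p - 1) * q" by (rule mult_le_mono2)
    then show False using q assms by linarith
  qed
  ultimately have "q = 1" by linarith
  then have "k + (p - 1 - k0) = p - 1" using q by simp
  then show "k = k0" using assms by linarith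
qed

lemma udual:
  fixes p k0 k :: nat
  assumes pp: "prime p" and k0: "k0 < p" and k: "k < p"
  shows "[(\<Sum>x<p. fdual p k0 (int x) * int x ^ k) = (if k = k0 then 1 else 0)] (mod int p)"
proof -
  have p2: "p \<ge> 2" using pp prime_ge_2_nat by blast
  show ?thesis
  proof (cases "k0 = 0")
    case True
    have eq: "(\<Sum>x<p. fdual p k0 (int x) * int x ^ k) =
        (\<Sum>x<p. int x ^ k) - (\<Sum>x<p. int x ^ (k + (p - 1)))"
    proof -
      have "(\<Sum>x<p. fdual p k0 (int x) * int x ^ k) =
        (\<Sum>x<p. int x ^ k) - (\<Sum>x<p. int x ^ k * int x ^ (p - 1))"
        using True by (simp add: fdual_def sum_subtractf algebra_simps)
      moreover have "(\<Sum>x<p. int x ^ (k + (p - 1))) = (\<Sum>x<p. int x ^ k * int x ^ (p - 1))"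
        by (simp only: power_add)
      ultimately show ?thesis by simp
    qed
    have c1: "[(\<Sum>x<p. int x ^ k) = (if k \<ge> 1 \<and> (p - 1) dvd k then -1 else 0)] (mod int p)"
      by (rule psum_int[OF pp])
    have c2: "[(\<Sum>x<p. int x ^ (k + (p - 1))) = (if k + (p - 1) \<ge> 1 \<and> (p - 1) dvd (k + (p - 1)) then -1 else 0)] (mod int p)"
      by (rule psum_int[OF pp])
    have c3: "[(\<Sum>x<p. int x ^ k) - (\<Sum>x<p. int x ^ (k + (p - 1))) =
        (if k \<ge> 1 \<and> (p - 1) dvd k then -1 else 0) - (if k + (p - 1) \<ge> 1 \<and> (p - 1) dvd (k + (p - 1)) then -1 else 0)] (mod int p)"
      using c1 c2 by (rule cong_diff)
    have "(if k \<ge> 1 \<and> (p - 1) dvd k then -1 else 0) - (if k + (p - 1) \<ge> 1 \<and> (p - 1) dvd (k + (p - 1)) then -1 else (0::int))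
          = (if k = k0 then 1 else 0)"
    proof -
      have dv: "(p - 1) dvd (k + (p - 1)) \<longleftrightarrow> (p - 1) dvd k"
        using dvd_add_left_iff[of "p - 1" "p - 1" k] by simp
      show ?thesis using True p2 dv by (cases "k = 0") auto
    qed
    then show ?thesis using eq c3 by simp
  next
    case False
    have eq: "(\<Sum>x<p. fdual p k0 (int x) * int x ^ k) = - (\<Sum>x<p. int x ^ (k + (p - 1 - k0)))"
      using False by (simp add: fdual_def sum_negf algebra_simps power_add)
    have c1: "[(\<Sum>x<p. int x ^ (k + (p - 1 - k0))) = (if k + (p - 1 - k0) \<ge> 1 \<and> (p - 1) dvd (k + (p - 1 - k0)) then -1 else 0)] (mod int p)"
      by (rule psum_int[OF pp])
    then have c2: "[- (\<Sum>x<p. int x ^ (k + (p - 1 - k0))) = - (if k + (p - 1 - k0) \<ge> 1 \<and> (p - 1) dvd (k + (p - 1 - k0)) then -1 else 0)] (mod int p)"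
      by (rule cong_minus_minus_iff[THEN iffD2])
    have "k + (p - 1 - k0) \<ge> 1 \<and> (p - 1) dvd (k + (p - 1 - k0)) \<longleftrightarrow> k = k0"
      using exp_aux[of p k0 k] p2 False k0 k by simp
    then show ?thesis using eq c2 by (simp split: if_splits)
  qed
qed

lemma mdual:
  fixes p n :: nat and \<kappa> \<kappa>0 :: "nat \<Rightarrow> nat"
  assumes pp: "prime p"
    and k: "\<kappa> \<in> PiE {0..<n} (\<lambda>_. {0..<p})" and k0: "\<kappa>0 \<in> PiE {0..<n} (\<lambda>_. {0..<p})"
  shows "[(\<Sum>v\<in>PiE {0..<n} (\<lambda>_. {0..<p}). (\<Prod>i<n. fdual p (\<kappa>0 i) (int (v i))) * (\<Prod>i<n. int (v i) ^ \<kappa> i))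
          = (if \<kappa> = \<kappa>0 then 1 else 0)] (mod int p)"
proof -
  have "(\<Sum>v\<in>PiE {0..<n} (\<lambda>_. {0..<p}). (\<Prod>i<n. fdual p (\<kappa>0 i) (int (v i))) * (\<Prod>i<n. int (v i) ^ \<kappa> i))
      = (\<Sum>v\<in>PiE {..<n} (\<lambda>_. {..<p}). \<Prod>i\<in>{..<n}. fdual p (\<kappa>0 i) (int (v i)) * int (v i) ^ \<kappa> i)"
    by (simp add: atLeast0LessThan prod.distrib)
  also have "\<dots> = (\<Prod>i\<in>{..<n}. \<Sum>x\<in>{..<p}. fdual p (\<kappa>0 i) (int x) * int x ^ \<kappa> i)"
    by (rule prod_sum_PiE[symmetric]) auto
  finally have eq: "(\<Sum>v\<in>PiE {0..<n} (\<lambda>_. {0..<p}). (\<Prod>i<n. fdual p (\<kappa>0 i) (int (v i))) * (\<Prod>i<n. int (v i) ^ \<kappa> i))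
      = (\<Prod>i\<in>{..<n}. \<Sum>x\<in>{..<p}. fdual p (\<kappa>0 i) (int x) * int x ^ \<kappa> i)" .
  have c: "[(\<Prod>i\<in>{..<n}. \<Sum>x\<in>{..<p}. fdual p (\<kappa>0 i) (int x) * int x ^ \<kappa> i)
       = (\<Prod>i\<in>{..<n}. if \<kappa> i = \<kappa>0 i then 1 else 0)] (mod int p)"
    by (rule cong_prod, rule udual[OF pp]) (use k k0 in auto)
  have iff: "(\<forall>i\<in>{..<n}. \<kappa> i = \<kappa>0 i) \<longleftrightarrow> \<kappa> = \<kappa>0"
  proof
    assume h: "\<forall>i\<in>{..<n}. \<kappa> i = \<kappa>0 i"
    show "\<kappa> = \<kappa>0"
    proof
      fix i show "\<kappa> i = \<kappa>0 i"
        using h k k0 by (cases "i < n") (auto simp: PiE_def extensional_def)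
    qed
  qed simp
  have "(\<Prod>i\<in>{..<n}. if \<kappa> i = \<kappa>0 i then 1 else (0::int)) = (if \<kappa> = \<kappa>0 then 1 else 0)"
  proof (cases "\<kappa> = \<kappa>0")
    case True then show ?thesis by simp
  next
    case False
    then obtain i where "i \<in> {..<n}" "\<kappa> i \<noteq> \<kappa>0 i" using iff by blast
    then show ?thesis using False by (simp add: prod_zero_iff) blast
  qed
  then show ?thesis using eq c by simp
qed




definition mnm :: "nat \<Rightarrow> (nat \<Rightarrow> nat) \<Rightarrow> (nat \<Rightarrow> nat) \<Rightarrow> nat" where
  "mnm n v \<kappa> = (\<Prod>i<n. v i ^ \<kappa> i)"

definition rawX :: "nat \<Rightarrow> nat \<Rightarrow> (nat \<times> nat \<Rightarrow> nat) \<Rightarrow> (nat \<Rightarrow> nat) \<Rightarrow> nat" where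
  "rawX n N r \<kappa> = (\<Sum>j<N. \<Prod>i<n. r (i, j) ^ \<kappa> i)"

definition joinS :: "nat \<Rightarrow> nat \<Rightarrow> nat \<Rightarrow> (nat \<times> nat \<Rightarrow> nat) \<Rightarrow> (nat \<times> nat \<Rightarrow> nat) \<Rightarrow> (nat \<times> nat \<Rightarrow> nat)" where
  "joinS n N M a b = restrict (\<lambda>(i,j). if j < N then a (i, j) else b (i, j - N)) ({0..<n} \<times> {0..<N+M})"

definition leftS :: "nat \<Rightarrow> nat \<Rightarrow> (nat \<times> nat \<Rightarrow> nat) \<Rightarrow> (nat \<times> nat \<Rightarrow> nat)" where
  "leftS n N r = restrict r ({0..<n} \<times> {0..<N})"

definition rightS :: "nat \<Rightarrow> nat \<Rightarrow> nat \<Rightarrow> (nat \<times> nat \<Rightarrow> nat) \<Rightarrow> (nat \<times> nat \<Rightarrow> nat)" where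
  "rightS n N M r = restrict (\<lambda>(i,j). r (i, N + j)) ({0..<n} \<times> {0..<M})"

lemma Xvec_rawX: "Xvec p n N r = restrict (\<lambda>\<kappa>. rawX n N r \<kappa> mod p) (exps p n)"
  by (simp add: Xvec_def rawX_def)

lemma sum_split_nat: fixes N M :: nat shows "(\<Sum>j<N+M. g j) = (\<Sum>j<N. g j) + (\<Sum>j<M. g (N + j))"
  by (induction M) (simp_all add: add.assoc)

lemma joinS_mem:
  assumes "a \<in> samples p n N" "b \<in> samples p n M"
  shows "joinS n N M a b \<in> samples p n (N + M)"
  using assms unfolding samples_def joinS_def by (auto simp: PiE_iff)

lemma rawX_join: "rawX n (N + M) (joinS n N M a b) \<kappa> = rawX n N a \<kappa> + rawX n M b \<kappa>"
proof -
  have "rawX n (N + M) (joinS n N M a b) \<kappa> =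
     (\<Sum>j<N. \<Prod>i<n. joinS n N M a b (i, j) ^ \<kappa> i) + (\<Sum>j<M. \<Prod>i<n. joinS n N M a b (i, N + j) ^ \<kappa> i)"
    unfolding rawX_def by (rule sum_split_nat)
  also have "(\<Sum>j<N. \<Prod>i<n. joinS n N M a b (i, j) ^ \<kappa> i) = rawX n N a \<kappa>"
    unfolding rawX_def joinS_def by (intro sum.cong prod.cong) auto
  also have "(\<Sum>j<M. \<Prod>i<n. joinS n N M a b (i, N + j) ^ \<kappa> i) = rawX n M b \<kappa>"
    unfolding rawX_def joinS_def by (intro sum.cong prod.cong) auto
  finally show ?thesis .
qed

lemma leftS_mem: "r \<in> samples p n (N + M) \<Longrightarrow> leftS n N r \<in> samples p n N"
  unfolding samples_def leftS_def by (auto simp: PiE_iff)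

lemma rightS_mem: "r \<in> samples p n (N + M) \<Longrightarrow> rightS n N M r \<in> samples p n M"
  unfolding samples_def rightS_def by (auto simp: PiE_iff)

lemma join_left_right:
  assumes "r \<in> samples p n (N + M)"
  shows "joinS n N M (leftS n N r) (rightS n N M r) = r"
proof
  fix x :: "nat \<times> nat"
  obtain i j where x: "x = (i, j)" by force
  show "joinS n N M (leftS n N r) (rightS n N M r) x = r x"
  proof (cases "x \<in> {0..<n} \<times> {0..<N+M}")
    case True
    then have i: "i < n" "j < N + M" by (auto simp: x)
    show ?thesis
    proof (cases "j < N")
      case True
      then show ?thesis using i by (simp add: joinS_def leftS_def x)
    next
      case False
      define k where "k = j - N"
      have j: "j = N + k" "k < M" using i False by (auto simp: k_def)
      show ?thesis using i by (simp add: joinS_def rightS_def x j)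
    qed
  next
    case False
    have "r x = undefined" by (rule PiE_arb[OF assms[unfolded samples_def] False])
    then show ?thesis using False unfolding joinS_def by simp
  qed
qed

lemma left_join:
  assumes "a \<in> samples p n N"
  shows "leftS n N (joinS n N M a b) = a"
proof
  fix x :: "nat \<times> nat"
  obtain i j where x: "x = (i, j)" by force
  show "leftS n N (joinS n N M a b) x = a x"
  proof (cases "x \<in> {0..<n} \<times> {0..<N}")
    case True
    then have i: "i < n" "j < N" by (auto simp: x)
    show ?thesis using i by (simp add: joinS_def leftS_def x)
  next
    case False
    have "a x = undefined" by (rule PiE_arb[OF assms[unfolded samples_def] False])
    then show ?thesis using False unfolding leftS_def by simp
  qed
qed

lemma right_join:
  assumes "b \<in> samples p n M"
  shows "rightS n N M (joinS n N M a b) = b"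
proof
  fix x :: "nat \<times> nat"
  obtain i j where x: "x = (i, j)" by force
  show "rightS n N M (joinS n N M a b) x = b x"
  proof (cases "x \<in> {0..<n} \<times> {0..<M}")
    case True
    then have i: "i < n" "j < M" by (auto simp: x)
    show ?thesis using i by (simp add: joinS_def rightS_def x)
  next
    case False
    have "b x = undefined" by (rule PiE_arb[OF assms[unfolded samples_def] False])
    then show ?thesis using False unfolding rightS_def by simp
  qed
qed

lemma split_bij:
  "bij_betw (\<lambda>r. (leftS n N r, rightS n N M r)) (samples p n (N + M)) (samples p n N \<times> samples p n M)"
proof (rule bij_betw_byWitness[where f' = "\<lambda>(a, b). joinS n N M a b"])
  show "\<forall>r\<in>samples p n (N + M). (\<lambda>(a, b). joinS n N M a b) (leftS n N r, rightS n N M r) = r"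
    using join_left_right by auto
  show "\<forall>ab\<in>samples p n N \<times> samples p n M. (leftS n N ((\<lambda>(a, b). joinS n N M a b) ab), rightS n N M ((\<lambda>(a, b). joinS n N M a b) ab)) = ab"
    using left_join right_join by auto
  show "(\<lambda>r. (leftS n N r, rightS n N M r)) ` samples p n (N + M) \<subseteq> samples p n N \<times> samples p n M"
    using leftS_mem rightS_mem by auto
  show "(\<lambda>(a, b). joinS n N M a b) ` (samples p n N \<times> samples p n M) \<subseteq> samples p n (N + M)"
    using joinS_mem by auto
qed

lemma rawX_split:
  assumes "r \<in> samples p n (N + M)"
  shows "rawX n (N + M) r \<kappa> = rawX n N (leftS n N r) \<kappa> + rawX n M (rightS n N M r) \<kappa>"
proof -
  have e: "joinS n N M (leftS n N r) (rightS n N M r) = r" by (rule join_left_right[OF assms])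
  show ?thesis using rawX_join[of n N M "leftS n N r" "rightS n N M r" \<kappa>] unfolding e .
qed




definition Reach :: "nat \<Rightarrow> nat \<Rightarrow> nat \<Rightarrow> ((nat \<Rightarrow> nat) \<Rightarrow> nat) \<Rightarrow> bool" where
  "Reach p n N w \<longleftrightarrow> (\<exists>r\<in>samples p n N. \<forall>\<kappa>\<in>exps p n. [rawX n N r \<kappa> = w \<kappa>] (mod p))"

lemma Reach_cong:
  assumes "Reach p n N w" "N = N'" "\<And>\<kappa>. \<kappa> \<in> exps p n \<Longrightarrow> [w \<kappa> = w' \<kappa>] (mod p)"
  shows "Reach p n N' w'"
proof -
  obtain r where r: "r \<in> samples p n N" "\<forall>\<kappa>\<in>exps p n. [rawX n N r \<kappa> = w \<kappa>] (mod p)"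
    using assms(1) unfolding Reach_def by blast
  have "\<forall>\<kappa>\<in>exps p n. [rawX n N' r \<kappa> = w' \<kappa>] (mod p)"
    using r(2) assms(2,3) cong_trans by blast
  then show ?thesis unfolding Reach_def using r(1) assms(2) by blast
qed

lemma Reach_add:
  assumes "Reach p n N w1" "Reach p n M w2"
  shows "Reach p n (N + M) (\<lambda>\<kappa>. w1 \<kappa> + w2 \<kappa>)"
proof -
  obtain a where a: "a \<in> samples p n N" "\<forall>\<kappa>\<in>exps p n. [rawX n N a \<kappa> = w1 \<kappa>] (mod p)"
    using assms(1) unfolding Reach_def by blast
  obtain b where b: "b \<in> samples p n M" "\<forall>\<kappa>\<in>exps p n. [rawX n M b \<kappa> = w2 \<kappa>] (mod p)"
    using assms(2) unfolding Reach_def by blast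
  have "\<forall>\<kappa>\<in>exps p n. [rawX n (N + M) (joinS n N M a b) \<kappa> = w1 \<kappa> + w2 \<kappa>] (mod p)"
  proof
    fix \<kappa> assume k: "\<kappa> \<in> exps p n"
    have "[rawX n N a \<kappa> + rawX n M b \<kappa> = w1 \<kappa> + w2 \<kappa>] (mod p)"
      using a(2) b(2) k by (intro cong_add) auto
    then show "[rawX n (N + M) (joinS n N M a b) \<kappa> = w1 \<kappa> + w2 \<kappa>] (mod p)"
      by (simp only: rawX_join)
  qed
  then show ?thesis unfolding Reach_def using joinS_mem[OF a(1) b(1)] by blast
qed

lemma exps_nonzero:
  assumes k: "\<kappa> \<in> exps p n"
  shows "\<exists>i<n. \<kappa> i \<noteq> 0"
proof (rule ccontr)
  assume "\<not> (\<exists>i<n. \<kappa> i \<noteq> 0)"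
  then have z: "\<And>i. i < n \<Longrightarrow> \<kappa> i = 0" by blast
  have kP: "\<kappa> \<in> PiE {0..<n} (\<lambda>_. {0..<p})" using k unfolding exps_def by blast
  have "\<kappa> = restrict (\<lambda>_. 0) {0..<n}"
  proof
    fix x show "\<kappa> x = restrict (\<lambda>_. 0) {0..<n} x"
    proof (cases "x \<in> {0..<n}")
      case True then show ?thesis using z by simp
    next
      case False then show ?thesis using PiE_arb[OF kP False] by simp
    qed
  qed
  then show False using k unfolding exps_def by blast
qed

lemma Reach_zero:
  assumes p: "p > 0"
  shows "Reach p n N (\<lambda>_. 0)"
proof -
  define r0 where "r0 = restrict (\<lambda>_::nat\<times>nat. 0::nat) ({0..<n} \<times> {0..<N})"
  have r0S: "r0 \<in> samples p n N" unfolding r0_def samples_def using p by (simp add: PiE_iff)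
  have "\<forall>\<kappa>\<in>exps p n. rawX n N r0 \<kappa> = 0"
  proof
    fix \<kappa> assume k: "\<kappa> \<in> exps p n"
    obtain i where i: "i < n" "\<kappa> i \<noteq> 0" using exps_nonzero[OF k] by blast
    have "\<And>j. j < N \<Longrightarrow> (\<Prod>i<n. r0 (i, j) ^ \<kappa> i) = 0"
    proof -
      fix j assume j: "j < N"
      have "r0 (i, j) ^ \<kappa> i = 0" using i j by (simp add: r0_def)
      then show "(\<Prod>i<n. r0 (i, j) ^ \<kappa> i) = 0"
        using i by (intro prod_zero) auto
    qed
    then show "rawX n N r0 \<kappa> = 0" unfolding rawX_def by simp
  qed
  then have "\<forall>\<kappa>\<in>exps p n. [rawX n N r0 \<kappa> = 0] (mod p)" by simp
  then show ?thesis unfolding Reach_def using r0S by blast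
qed

lemma Reach_one:
  assumes v: "v \<in> PiE {0..<n} (\<lambda>_. {0..<p})"
  shows "Reach p n 1 (mnm n v)"
proof -
  define r where "r = restrict (\<lambda>(i, j::nat). v i) ({0..<n} \<times> {0..<1})"
  have rS: "r \<in> samples p n 1" unfolding r_def samples_def using v by (auto simp: PiE_iff)
  have "\<forall>\<kappa>\<in>exps p n. rawX n 1 r \<kappa> = mnm n v \<kappa>"
    unfolding rawX_def mnm_def r_def by simp
  then have "\<forall>\<kappa>\<in>exps p n. [rawX n 1 r \<kappa> = mnm n v \<kappa>] (mod p)" by simp
  then show ?thesis unfolding Reach_def using rS by blast
qed

lemma Reach_scal:
  assumes v: "v \<in> PiE {0..<n} (\<lambda>_. {0..<p})" and p: "p > 0"
  shows "Reach p n k (\<lambda>\<kappa>. k * mnm n v \<kappa>)"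
proof (induction k)
  case 0
  show ?case using Reach_zero[OF p, of n 0] by simp
next
  case (Suc k)
  have "Reach p n (k + 1) (\<lambda>\<kappa>. k * mnm n v \<kappa> + mnm n v \<kappa>)"
    by (rule Reach_add[OF Suc Reach_one[OF v]])
  then show ?case by (rule Reach_cong) (simp_all add: add.commute)
qed

lemma Reach_pad:
  assumes "Reach p n N w" "N \<le> M" "p > 0"
  shows "Reach p n M w"
proof -
  have "Reach p n (N + (M - N)) (\<lambda>\<kappa>. w \<kappa> + 0)"
    by (rule Reach_add[OF assms(1) Reach_zero[OF assms(3)]])
  then show ?thesis by (rule Reach_cong) (use assms(2) in auto)
qed

lemma Reach_sum:
  assumes p: "p > 0" and fin: "finite W"
  shows "W \<subseteq> PiE {0..<n} (\<lambda>_. {0..<p}) \<Longrightarrow> (\<forall>v\<in>W. c v < p) \<Longrightarrow>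
    Reach p n ((p - 1) * card W) (\<lambda>\<kappa>. \<Sum>v\<in>W. c v * mnm n v \<kappa>)"
  using fin
proof (induction W rule: finite_induct)
  case empty
  show ?case using Reach_zero[OF p, of n 0] by simp
next
  case (insert v W)
  have IH: "Reach p n ((p - 1) * card W) (\<lambda>\<kappa>. \<Sum>v\<in>W. c v * mnm n v \<kappa>)"
    using insert by auto
  have vV: "v \<in> PiE {0..<n} (\<lambda>_. {0..<p})" using insert by auto
  have "c v \<le> p - 1" using insert by auto
  then have S: "Reach p n (p - 1) (\<lambda>\<kappa>. c v * mnm n v \<kappa>)"
    using Reach_pad[OF Reach_scal[OF vV p] _ p] by blast
  have "Reach p n ((p - 1) * card W + (p - 1)) (\<lambda>\<kappa>. (\<Sum>v\<in>W. c v * mnm n v \<kappa>) + c v * mnm n v \<kappa>)"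
    by (rule Reach_add[OF IH S])
  then show ?case
  proof (rule Reach_cong)
    show "(p - 1) * card W + (p - 1) = (p - 1) * card (insert v W)"
      using insert by simp
  next
    fix \<kappa>
    show "[(\<Sum>v\<in>W. c v * mnm n v \<kappa>) + c v * mnm n v \<kappa> = (\<Sum>v\<in>insert v W. c v * mnm n v \<kappa>)] (mod p)"
      using insert by (simp add: add.commute)
  qed
qed


lemma card_V: "card (PiE {0..<n} (\<lambda>_::nat. {0..<p::nat})) = p ^ n"
  by (simp add: card_PiE)

lemma finite_exps: "finite (exps p n)"
  unfolding exps_def by (intro finite_Diff finite_PiE) auto

lemma target_surj:
  assumes pp: "prime p" and z: "z \<in> target p n"
  shows "\<exists>r\<in>samples p n ((p - 1) * p ^ n). Xvec p n ((p - 1) * p ^ n) r = z"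
proof -
  have p0: "p > 0" using pp prime_gt_0_nat by blast
  define V where "V = PiE {0..<n} (\<lambda>_::nat. {0..<p})"
  define F where "F = (\<lambda>\<kappa>0 v. (\<Prod>i<n. fdual p (\<kappa>0 i) (int (v i))))"
  define c where "c = (\<lambda>v. nat ((\<Sum>\<kappa>0\<in>exps p n. int (z \<kappa>0) * F \<kappa>0 v) mod int p))"
  have cp: "\<forall>v\<in>V. c v < p"
  proof
    fix v
    have "(\<Sum>\<kappa>0\<in>exps p n. int (z \<kappa>0) * F \<kappa>0 v) mod int p < int p" using p0 by simp
    then show "c v < p" unfolding c_def using p0 by (simp add: nat_less_iff)
  qed
  have finV: "finite V" unfolding V_def by (intro finite_PiE) auto
  have R: "Reach p n ((p - 1) * card V) (\<lambda>\<kappa>. \<Sum>v\<in>V. c v * mnm n v \<kappa>)"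
    using Reach_sum[OF p0 finV, of n c] cp unfolding V_def by blast
  have cardV: "card V = p ^ n" unfolding V_def by (rule card_V)
  obtain r where r: "r \<in> samples p n ((p - 1) * p ^ n)"
    "\<forall>\<kappa>\<in>exps p n. [rawX n ((p - 1) * p ^ n) r \<kappa> = (\<Sum>v\<in>V. c v * mnm n v \<kappa>)] (mod p)"
    using R unfolding Reach_def cardV by blast
  have zP: "z \<in> PiE (exps p n) (\<lambda>_. {0..<p})" using z unfolding target_def .
  have key: "[(\<Sum>v\<in>V. c v * mnm n v \<kappa>) = z \<kappa>] (mod p)" if k: "\<kappa> \<in> exps p n" for \<kappa>
  proof -
    define M where "M = (\<lambda>v. (\<Prod>i<n. int (v i) ^ \<kappa> i))"
    have e1: "int (\<Sum>v\<in>V. c v * mnm n v \<kappa>) = (\<Sum>v\<in>V. int (c v) * M v)"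
      by (simp add: mnm_def M_def)
    have c_cong: "[int (c v) = (\<Sum>\<kappa>0\<in>exps p n. int (z \<kappa>0) * F \<kappa>0 v)] (mod int p)" for v
    proof -
      have "int (c v) = (\<Sum>\<kappa>0\<in>exps p n. int (z \<kappa>0) * F \<kappa>0 v) mod int p"
        unfolding c_def using p0 by simp
      then show ?thesis by (simp add: cong_def)
    qed
    have e2: "[(\<Sum>v\<in>V. int (c v) * M v) = (\<Sum>v\<in>V. (\<Sum>\<kappa>0\<in>exps p n. int (z \<kappa>0) * F \<kappa>0 v) * M v)] (mod int p)"
      by (intro cong_sum cong_scalar_right c_cong)
    have e3: "(\<Sum>v\<in>V. (\<Sum>\<kappa>0\<in>exps p n. int (z \<kappa>0) * F \<kappa>0 v) * M v)
        = (\<Sum>\<kappa>0\<in>exps p n. int (z \<kappa>0) * (\<Sum>v\<in>V. F \<kappa>0 v * M v))"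
      by (simp add: sum_distrib_right sum_distrib_left mult.assoc sum.swap[of _ V])
    have kE: "\<kappa> \<in> PiE {0..<n} (\<lambda>_. {0..<p})" using k unfolding exps_def by blast
    have e4: "[(\<Sum>\<kappa>0\<in>exps p n. int (z \<kappa>0) * (\<Sum>v\<in>V. F \<kappa>0 v * M v))
        = (\<Sum>\<kappa>0\<in>exps p n. int (z \<kappa>0) * (if \<kappa> = \<kappa>0 then 1 else 0))] (mod int p)"
    proof (intro cong_sum cong_scalar_left)
      fix \<kappa>0 assume k0: "\<kappa>0 \<in> exps p n"
      then have k0E: "\<kappa>0 \<in> PiE {0..<n} (\<lambda>_. {0..<p})" unfolding exps_def by blast
      show "[(\<Sum>v\<in>V. F \<kappa>0 v * M v) = (if \<kappa> = \<kappa>0 then 1 else 0)] (mod int p)"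
        using mdual[OF pp kE k0E] unfolding V_def F_def M_def .
    qed
    have e5: "(\<Sum>\<kappa>0\<in>exps p n. int (z \<kappa>0) * (if \<kappa> = \<kappa>0 then 1 else 0)) = int (z \<kappa>)"
    proof -
      have "(\<Sum>\<kappa>0\<in>exps p n. int (z \<kappa>0) * (if \<kappa> = \<kappa>0 then 1 else 0))
          = (\<Sum>\<kappa>0\<in>exps p n. if \<kappa>0 = \<kappa> then int (z \<kappa>0) else 0)"
        by (intro sum.cong) auto
      also have "\<dots> = int (z \<kappa>)" using finite_exps k by (simp add: sum.delta')
      finally show ?thesis .
    qed
    have "[int (\<Sum>v\<in>V. c v * mnm n v \<kappa>) = int (z \<kappa>)] (mod int p)"
      using e2 e4 unfolding e1 e3 e5 by (rule cong_trans)
    then show ?thesis by (simp only: cong_int_iff)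
  qed
  have "Xvec p n ((p - 1) * p ^ n) r = z"
  proof
    fix \<kappa>
    show "Xvec p n ((p - 1) * p ^ n) r \<kappa> = z \<kappa>"
    proof (cases "\<kappa> \<in> exps p n")
      case True
      have "[rawX n ((p - 1) * p ^ n) r \<kappa> = z \<kappa>] (mod p)"
        using r(2) True key[OF True] cong_trans by blast
      moreover have "z \<kappa> < p" using zP True by (auto simp: PiE_iff)
      ultimately show ?thesis using True by (simp add: Xvec_rawX cong_def)
    next
      case False
      then show ?thesis using PiE_arb[OF zP False] by (simp add: Xvec_rawX)
    qed
  qed
  then show ?thesis using r(1) by blast
qed




definition gadd :: "nat \<Rightarrow> nat \<Rightarrow> ((nat \<Rightarrow> nat) \<Rightarrow> nat) \<Rightarrow> ((nat \<Rightarrow> nat) \<Rightarrow> nat) \<Rightarrow> ((nat \<Rightarrow> nat) \<Rightarrow> nat)" where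
  "gadd p n x y = restrict (\<lambda>\<kappa>. (x \<kappa> + y \<kappa>) mod p) (exps p n)"

definition gsub :: "nat \<Rightarrow> nat \<Rightarrow> ((nat \<Rightarrow> nat) \<Rightarrow> nat) \<Rightarrow> ((nat \<Rightarrow> nat) \<Rightarrow> nat) \<Rightarrow> ((nat \<Rightarrow> nat) \<Rightarrow> nat)" where
  "gsub p n x y = restrict (\<lambda>\<kappa>. (x \<kappa> + (p - y \<kappa>)) mod p) (exps p n)"

definition cnt :: "nat \<Rightarrow> nat \<Rightarrow> nat \<Rightarrow> ((nat \<Rightarrow> nat) \<Rightarrow> nat) \<Rightarrow> nat" where
  "cnt p n N x = card {r \<in> samples p n N. Xvec p n N r = x}"

lemma gadd_mem: "p > 0 \<Longrightarrow> gadd p n x y \<in> target p n"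
  unfolding gadd_def target_def by (simp add: PiE_iff)

lemma gsub_mem: "p > 0 \<Longrightarrow> gsub p n x y \<in> target p n"
  unfolding gsub_def target_def by (simp add: PiE_iff)

lemma pt_add_sub:
  fixes u w x p :: nat
  assumes "u < p" "w < p" "x < p"
  shows "((u + w) mod p = x) \<longleftrightarrow> (w = (x + (p - u)) mod p)"
proof
  assume h: "(u + w) mod p = x"
  show "w = (x + (p - u)) mod p"
  proof (cases "u + w < p")
    case True
    then have "x = u + w" using h by simp
    then have "x + (p - u) = w + p" using assms by simp
    then show ?thesis using assms by simp
  next
    case False
    then have "(u + w) mod p = u + w - p" using assms by (simp add: le_mod_geq)
    then have "x + (p - u) = w" using h assms False by simp
    then show ?thesis using assms by simp
  qed
next
  assume h: "w = (x + (p - u)) mod p"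
  show "(u + w) mod p = x"
  proof (cases "x < u")
    case True
    then have "w = x + (p - u)" using h assms by simp
    then have "u + w = x + p" using assms by simp
    then show ?thesis using assms by simp
  next
    case False
    then have "(x + (p - u)) mod p = x - u" using assms by (simp add: le_mod_geq)
    then have "u + w = x" using h False by simp
    then show ?thesis using assms by simp
  qed
qed

lemma gadd_gsub_iff:
  assumes "u \<in> target p n" "w \<in> target p n" "x \<in> target p n"
  shows "(gadd p n u w = x) \<longleftrightarrow> (w = gsub p n x u)"
proof -
  have uP: "u \<in> PiE (exps p n) (\<lambda>_. {0..<p})" and wP: "w \<in> PiE (exps p n) (\<lambda>_. {0..<p})"
    and xP: "x \<in> PiE (exps p n) (\<lambda>_. {0..<p})" using assms unfolding target_def by auto
  have "(gadd p n u w = x) \<longleftrightarrow> (\<forall>\<kappa>\<in>exps p n. (u \<kappa> + w \<kappa>) mod p = x \<kappa>)"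
  proof
    assume "gadd p n u w = x" then show "\<forall>\<kappa>\<in>exps p n. (u \<kappa> + w \<kappa>) mod p = x \<kappa>"
      unfolding gadd_def by auto
  next
    assume h: "\<forall>\<kappa>\<in>exps p n. (u \<kappa> + w \<kappa>) mod p = x \<kappa>"
    show "gadd p n u w = x"
    proof
      fix \<kappa> show "gadd p n u w \<kappa> = x \<kappa>"
        using h PiE_arb[OF xP, of \<kappa>] unfolding gadd_def by (cases "\<kappa> \<in> exps p n") auto
    qed
  qed
  also have "\<dots> \<longleftrightarrow> (\<forall>\<kappa>\<in>exps p n. w \<kappa> = (x \<kappa> + (p - u \<kappa>)) mod p)"
  proof -
    have "\<forall>\<kappa>\<in>exps p n. ((u \<kappa> + w \<kappa>) mod p = x \<kappa>) = (w \<kappa> = (x \<kappa> + (p - u \<kappa>)) mod p)"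
    proof
      fix \<kappa> assume k: "\<kappa> \<in> exps p n"
      have "u \<kappa> < p" "w \<kappa> < p" "x \<kappa> < p" using uP wP xP k by (auto simp: PiE_iff)
      then show "((u \<kappa> + w \<kappa>) mod p = x \<kappa>) = (w \<kappa> = (x \<kappa> + (p - u \<kappa>)) mod p)"
        by (rule pt_add_sub)
    qed
    then show ?thesis by blast
  qed
  also have "\<dots> \<longleftrightarrow> (w = gsub p n x u)"
  proof
    assume h: "\<forall>\<kappa>\<in>exps p n. w \<kappa> = (x \<kappa> + (p - u \<kappa>)) mod p"
    show "w = gsub p n x u"
    proof
      fix \<kappa> show "w \<kappa> = gsub p n x u \<kappa>"
        using h PiE_arb[OF wP, of \<kappa>] unfolding gsub_def by (cases "\<kappa> \<in> exps p n") auto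
    qed
  next
    assume "w = gsub p n x u" then show "\<forall>\<kappa>\<in>exps p n. w \<kappa> = (x \<kappa> + (p - u \<kappa>)) mod p"
      unfolding gsub_def by auto
  qed
  finally show ?thesis .
qed

lemma gadd_comm: "gadd p n u w = gadd p n w u"
  unfolding gadd_def by (simp add: add.commute)

lemma gsub_gsub:
  assumes "p > 0" "x \<in> target p n" "y \<in> target p n"
  shows "gsub p n x (gsub p n x y) = y"
proof -
  have s: "gsub p n x y \<in> target p n" using gsub_mem[OF assms(1)] .
  have "gadd p n y (gsub p n x y) = x" using gadd_gsub_iff[OF assms(3) s assms(2)] by simp
  then have "gadd p n (gsub p n x y) y = x" by (simp add: gadd_comm)
  then show ?thesis using gadd_gsub_iff[OF s assms(3) assms(2)] by simp
qed

lemma gsub_gadd: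
  assumes "p > 0" "w \<in> target p n" "y \<in> target p n"
  shows "gsub p n (gadd p n y w) y = w"
proof -
  have m: "gadd p n y w \<in> target p n" by (rule gadd_mem[OF assms(1)])
  show ?thesis using gadd_gsub_iff[OF assms(3) assms(2) m] by simp
qed

lemma gadd_gsub:
  assumes "p > 0" "x \<in> target p n" "y \<in> target p n"
  shows "gadd p n y (gsub p n x y) = x"
proof -
  have m: "gsub p n x y \<in> target p n" by (rule gsub_mem[OF assms(1)])
  show ?thesis using gadd_gsub_iff[OF assms(3) m assms(2)] by simp
qed

lemma Xvec_mem: "p > 0 \<Longrightarrow> Xvec p n N r \<in> target p n"
  unfolding Xvec_def target_def by (simp add: PiE_iff)

lemma Xvec_split:
  assumes "r \<in> samples p n (N + M)"
  shows "Xvec p n (N + M) r = gadd p n (Xvec p n N (leftS n N r)) (Xvec p n M (rightS n N M r))"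
proof
  fix \<kappa>
  show "Xvec p n (N + M) r \<kappa> = gadd p n (Xvec p n N (leftS n N r)) (Xvec p n M (rightS n N M r)) \<kappa>"
    unfolding Xvec_rawX gadd_def rawX_split[OF assms] by (simp add: mod_add_eq)
qed

lemma finite_samples: "finite (samples p n N)"
  unfolding samples_def by (intro finite_PiE) auto

lemma card_samples: "card (samples p n N) = p ^ (n * N)"
  unfolding samples_def by (simp add: card_PiE card_cartesian_product)

lemma finite_target: "finite (target p n)"
  unfolding target_def using finite_exps by (intro finite_PiE) auto

lemma sum_group_card:
  fixes g :: "'b \<Rightarrow> 'c::comm_semiring_1"
  assumes "finite S" "finite G" "f ` S \<subseteq> G"
  shows "(\<Sum>a\<in>S. g (f a)) = (\<Sum>y\<in>G. of_nat (card {a\<in>S. f a = y}) * g y)"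
proof -
  have "(\<Sum>a\<in>S. g (f a)) = (\<Sum>y\<in>G. \<Sum>a\<in>{a\<in>S. f a = y}. g (f a))"
    using sum.group[OF assms, of "\<lambda>a. g (f a)"] by simp
  also have "\<dots> = (\<Sum>y\<in>G. of_nat (card {a\<in>S. f a = y}) * g y)"
  proof (rule sum.cong)
    fix y assume "y \<in> G"
    have "(\<Sum>a\<in>{a\<in>S. f a = y}. g (f a)) = (\<Sum>a\<in>{a\<in>S. f a = y}. g y)"
      by (rule sum.cong) auto
    then show "(\<Sum>a\<in>{a\<in>S. f a = y}. g (f a)) = of_nat (card {a\<in>S. f a = y}) * g y"
      by simp
  qed simp
  finally show ?thesis .
qed

lemma cnt_sum:
  assumes "p > 0"
  shows "(\<Sum>y\<in>target p n. cnt p n N y) = p ^ (n * N)"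
proof -
  have "(\<Sum>a\<in>samples p n N. (1::nat)) = (\<Sum>y\<in>target p n. of_nat (cnt p n N y) * 1)"
    unfolding cnt_def
    by (rule sum_group_card[OF finite_samples finite_target]) (use Xvec_mem[OF assms] in blast)
  then show ?thesis using card_samples[of p n N] by simp
qed

lemma cnt_conv:
  assumes p: "p > 0" and x: "x \<in> target p n"
  shows "cnt p n (N + M) x = (\<Sum>y\<in>target p n. cnt p n N y * cnt p n M (gsub p n x y))"
proof -
  let ?phi = "\<lambda>r. (leftS n N r, rightS n N M r)"
  define A where "A = {r \<in> samples p n (N + M). Xvec p n (N + M) r = x}"
  define B where "B = {ab \<in> samples p n N \<times> samples p n M. gadd p n (Xvec p n N (fst ab)) (Xvec p n M (snd ab)) = x}"
  have img: "?phi ` A = B"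
  proof
    show "?phi ` A \<subseteq> B"
    proof
      fix ab assume "ab \<in> ?phi ` A"
      then obtain r where r: "r \<in> A" "ab = ?phi r" by blast
      then have rS: "r \<in> samples p n (N + M)" unfolding A_def by blast
      show "ab \<in> B" unfolding B_def using r rS leftS_mem[OF rS] rightS_mem[OF rS] Xvec_split[OF rS]
        unfolding A_def by auto
    qed
  next
    show "B \<subseteq> ?phi ` A"
    proof
      fix ab assume ab: "ab \<in> B"
      obtain a b where abd: "ab = (a, b)" by force
      have a: "a \<in> samples p n N" and b: "b \<in> samples p n M" and e: "gadd p n (Xvec p n N a) (Xvec p n M b) = x"
        using ab unfolding B_def abd by auto
      define r where "r = joinS n N M a b"
      have rS: "r \<in> samples p n (N + M)" unfolding r_def by (rule joinS_mem[OF a b])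
      have l: "leftS n N r = a" unfolding r_def by (rule left_join[OF a])
      have rr: "rightS n N M r = b" unfolding r_def by (rule right_join[OF b])
      have "Xvec p n (N + M) r = x" using Xvec_split[OF rS] l rr e by simp
      then have "r \<in> A" unfolding A_def using rS by blast
      then show "ab \<in> ?phi ` A" using l rr abd by force
    qed
  qed
  have inj: "inj_on ?phi A"
    using split_bij[of n N M p] unfolding A_def bij_betw_def by (auto intro: inj_on_subset)
  have cA: "card A = card B" using card_image[OF inj] img by simp
  have BS: "B = Sigma (samples p n N) (\<lambda>a. {b \<in> samples p n M. Xvec p n M b = gsub p n x (Xvec p n N a)})"
  proof -
    have iff: "(gadd p n (Xvec p n N a) (Xvec p n M b) = x) = (Xvec p n M b = gsub p n x (Xvec p n N a))" for a b
      by (rule gadd_gsub_iff[OF Xvec_mem[OF p] Xvec_mem[OF p] x])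
    show ?thesis unfolding B_def using iff by auto
  qed
  have "card B = (\<Sum>a\<in>samples p n N. cnt p n M (gsub p n x (Xvec p n N a)))"
    unfolding BS cnt_def by (rule card_SigmaI) (auto simp: finite_samples)
  also have "\<dots> = (\<Sum>y\<in>target p n. of_nat (cnt p n N y) * cnt p n M (gsub p n x y))"
    unfolding cnt_def
    by (rule sum_group_card[OF finite_samples finite_target]) (use Xvec_mem[OF p] in blast)
  finally show ?thesis using cA unfolding A_def cnt_def by simp
qed




lemma doeblin:
  fixes f g K :: "'a \<Rightarrow> real" and sub :: "'a \<Rightarrow> 'a \<Rightarrow> 'a" and \<delta> :: real
  assumes fin: "finite G" and ne: "G \<noteq> {}"
    and conv: "\<And>x. x \<in> G \<Longrightarrow> g x = (\<Sum>y\<in>G. f y * K (sub x y))"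
    and subG: "\<And>x y. x \<in> G \<Longrightarrow> y \<in> G \<Longrightarrow> sub x y \<in> G"
    and Ksum: "\<And>y. y \<in> G \<Longrightarrow> (\<Sum>x\<in>G. K (sub x y)) = 1"
    and Ksum2: "\<And>x. x \<in> G \<Longrightarrow> (\<Sum>y\<in>G. K (sub x y)) = 1"
    and Kge: "\<And>z. z \<in> G \<Longrightarrow> K z \<ge> \<delta>"
    and fsum: "(\<Sum>y\<in>G. f y) = 1"
  shows "(\<Sum>x\<in>G. \<bar>g x - 1 / card G\<bar>) \<le> (1 - card G * \<delta>) * (\<Sum>y\<in>G. \<bar>f y - 1 / card G\<bar>)"
proof -
  define u where "u = 1 / real (card G)"
  have cG: "real (card G) > 0" using fin ne by (simp add: card_gt_0_iff)
  have cu: "real (card G) * u = 1" unfolding u_def using cG by simp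
  have sumfu: "(\<Sum>y\<in>G. f y - u) = 0" using fsum cu by (simp add: sum_subtractf)
  have eq: "g x - u = (\<Sum>y\<in>G. (f y - u) * (K (sub x y) - \<delta>))" if x: "x \<in> G" for x
  proof -
    have "(\<Sum>y\<in>G. (f y - u) * (K (sub x y) - \<delta>)) =
        (\<Sum>y\<in>G. (f y * K (sub x y) - u * K (sub x y)) - \<delta> * (f y - u))"
      by (rule sum.cong) (simp_all add: algebra_simps)
    also have "\<dots> = (\<Sum>y\<in>G. f y * K (sub x y)) - (\<Sum>y\<in>G. u * K (sub x y)) - (\<Sum>y\<in>G. \<delta> * (f y - u))"
      by (simp only: sum_subtractf)
    also have "\<dots> = (\<Sum>y\<in>G. f y * K (sub x y)) - u * (\<Sum>y\<in>G. K (sub x y)) - \<delta> * (\<Sum>y\<in>G. f y - u)"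
      by (simp only: sum_distrib_left)
    also have "\<dots> = g x - u" using conv[OF x] Ksum2[OF x] sumfu by simp
    finally show ?thesis by simp
  qed
  have le: "\<bar>g x - u\<bar> \<le> (\<Sum>y\<in>G. \<bar>f y - u\<bar> * (K (sub x y) - \<delta>))" if x: "x \<in> G" for x
  proof -
    have "\<bar>g x - u\<bar> \<le> (\<Sum>y\<in>G. \<bar>(f y - u) * (K (sub x y) - \<delta>)\<bar>)"
      unfolding eq[OF x] by (rule sum_abs)
    also have "\<dots> = (\<Sum>y\<in>G. \<bar>f y - u\<bar> * (K (sub x y) - \<delta>))"
    proof (rule sum.cong)
      fix y assume y: "y \<in> G"
      have "K (sub x y) - \<delta> \<ge> 0" using Kge[OF subG[OF x y]] by simp
      then show "\<bar>(f y - u) * (K (sub x y) - \<delta>)\<bar> = \<bar>f y - u\<bar> * (K (sub x y) - \<delta>)"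
        by (simp add: abs_mult)
    qed simp
    finally show ?thesis .
  qed
  have "(\<Sum>x\<in>G. \<bar>g x - u\<bar>) \<le> (\<Sum>x\<in>G. \<Sum>y\<in>G. \<bar>f y - u\<bar> * (K (sub x y) - \<delta>))"
    by (rule sum_mono) (rule le)
  also have "\<dots> = (\<Sum>y\<in>G. \<Sum>x\<in>G. \<bar>f y - u\<bar> * (K (sub x y) - \<delta>))"
    by (rule sum.swap)
  also have "\<dots> = (\<Sum>y\<in>G. \<bar>f y - u\<bar> * (\<Sum>x\<in>G. (K (sub x y) - \<delta>)))"
    by (simp only: sum_distrib_left)
  also have "\<dots> = (\<Sum>y\<in>G. \<bar>f y - u\<bar> * (1 - card G * \<delta>))"
    by (rule sum.cong) (simp_all add: sum_subtractf Ksum)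
  also have "\<dots> = (1 - card G * \<delta>) * (\<Sum>y\<in>G. \<bar>f y - u\<bar>)"
    by (simp add: sum_distrib_left mult.commute)
  finally show ?thesis unfolding u_def .
qed

lemma exp_bound:
  fixes D :: "nat \<Rightarrow> real" and \<theta> :: real and m :: nat
  assumes t0: "0 \<le> \<theta>" and t1: "\<theta> < 1" and m: "m > 0"
    and D: "\<And>N. D N \<le> 2 * \<theta> ^ (N div m)"
  shows "\<exists>c>0. \<exists>N0. \<forall>N\<ge>N0. D N \<le> exp (- c * real N)"
proof -
  define t where "t = max \<theta> (1/2)"
  have tpos: "t > 0" and tlt: "t < 1" and tge: "\<theta> \<le> t" using t1 by (auto simp: t_def)
  define a where "a = - ln t"
  have apos: "a > 0" unfolding a_def using tpos tlt by simp
  define c where "c = a / (2 * real m)"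
  have cpos: "c > 0" unfolding c_def using apos m by simp
  define N0 where "N0 = nat \<lceil>(ln 2 + a) / c\<rceil>"
  have "\<forall>N\<ge>N0. D N \<le> exp (- c * real N)"
  proof (intro allI impI)
    fix N assume N: "N \<ge> N0"
    define q where "q = N div m"
    have "real N < (real q + 1) * real m"
    proof -
      have h1: "q * m + N mod m = N" unfolding q_def by (rule div_mult_mod_eq)
      have h2: "N mod m < m" using m by simp
      have "N < (q + 1) * m" using h1 h2 by (simp only: distrib_right mult_1)
      then have "real N < real ((q + 1) * m)" by (simp only: of_nat_less_iff)
      then show ?thesis by (simp add: distrib_right)
    qed
    then have qge: "real q \<ge> real N / real m - 1" using m by (simp add: field_simps)
    have "\<theta> ^ q \<le> t ^ q" using tge t0 by (rule power_mono)
    also have "t ^ q = exp (- a * real q)"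
    proof -
      have e: "exp (real q * ln t) = t ^ q" using exp_of_nat_mult[of q "ln t"] tpos by simp
      then show ?thesis unfolding a_def by (simp add: mult.commute)
    qed
    also have "\<dots> \<le> exp (- a * (real N / real m - 1))" using qge apos by simp
    also have "- a * (real N / real m - 1) = a - 2 * c * real N" unfolding c_def using m
      by (simp add: field_simps)
    finally have th: "\<theta> ^ q \<le> exp (a - 2 * c * real N)" .
    have "(ln 2 + a) / c \<le> real N"
    proof -
      have "(ln 2 + a) / c \<le> real_of_int \<lceil>(ln 2 + a) / c\<rceil>" by (rule le_of_int_ceiling)
      also have "\<dots> \<le> real N0" unfolding N0_def by linarith
      also have "\<dots> \<le> real N" using N by simp
      finally show ?thesis .
    qed
    then have lnN: "ln 2 + a \<le> c * real N" using cpos by (simp add: field_simps)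
    have "D N \<le> 2 * exp (a - 2 * c * real N)" using D[of N] th unfolding q_def by simp
    also have "2 * exp (a - 2 * c * real N) = exp (ln 2 + a - 2 * c * real N)"
      by (simp add: exp_add exp_diff)
    also have "\<dots> \<le> exp (- c * real N)" using lnN by simp
    finally show "D N \<le> exp (- c * real N)" .
  qed
  then show ?thesis using cpos by blast
qed




definition Pr :: "nat \<Rightarrow> nat \<Rightarrow> nat \<Rightarrow> ((nat \<Rightarrow> nat) \<Rightarrow> nat) \<Rightarrow> real" where
  "Pr p n N x = real (cnt p n N x) / real (p ^ (n * N))"

lemma zero_in_target: "p > 0 \<Longrightarrow> restrict (\<lambda>_. 0) (exps p n) \<in> target p n"
  unfolding target_def by (simp add: PiE_iff)

lemma target_ne: "p > 0 \<Longrightarrow> target p n \<noteq> {}"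
  using zero_in_target by blast

lemma samples_ne: "p > 0 \<Longrightarrow> samples p n N \<noteq> {}"
proof
  assume "p > 0" "samples p n N = {}"
  then have "card (samples p n N) = 0" by simp
  then show False using card_samples[of p n N] \<open>p > 0\<close> by simp
qed

lemma l1_eq:
  assumes p: "p > 0"
  shows "l1_dist p n N = (\<Sum>x\<in>target p n. \<bar>Pr p n N x - 1 / real (card (target p n))\<bar>)"
  unfolding l1_dist_def
proof (rule sum.cong)
  fix x assume x: "x \<in> target p n"
  have "pmf (distP p n N) x = measure (measure_pmf (pmf_of_set (samples p n N))) (Xvec p n N -` {x})"
    unfolding distP_def by (rule pmf_map)
  also have "\<dots> = real (card (samples p n N \<inter> Xvec p n N -` {x})) / real (card (samples p n N))"
    by (rule measure_pmf_of_set[OF samples_ne[OF p] finite_samples])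
  also have "samples p n N \<inter> Xvec p n N -` {x} = {r \<in> samples p n N. Xvec p n N r = x}" by auto
  finally have e1: "pmf (distP p n N) x = Pr p n N x"
    unfolding Pr_def cnt_def card_samples .
  have e2: "pmf (distU p n) x = 1 / real (card (target p n))"
    unfolding distU_def using pmf_of_set[OF target_ne[OF p] finite_target] x by simp
  show "\<bar>pmf (distP p n N) x - pmf (distU p n) x\<bar> = \<bar>Pr p n N x - 1 / real (card (target p n))\<bar>"
    using e1 e2 by simp
qed simp

lemma Pr_conv:
  assumes p: "p > 0" and x: "x \<in> target p n"
  shows "Pr p n (N + M) x = (\<Sum>y\<in>target p n. Pr p n N y * Pr p n M (gsub p n x y))"
proof -
  have pw: "real (p ^ (n * (N + M))) = real (p ^ (n * N)) * real (p ^ (n * M))"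
    by (simp add: add_mult_distrib2 power_add)
  have "real (cnt p n (N + M) x) = (\<Sum>y\<in>target p n. real (cnt p n N y) * real (cnt p n M (gsub p n x y)))"
    unfolding cnt_conv[OF p x] by simp
  then have "Pr p n (N + M) x = (\<Sum>y\<in>target p n. real (cnt p n N y) * real (cnt p n M (gsub p n x y))) / (real (p ^ (n * N)) * real (p ^ (n * M)))"
    unfolding Pr_def pw by simp
  also have "\<dots> = (\<Sum>y\<in>target p n. real (cnt p n N y) * real (cnt p n M (gsub p n x y)) / (real (p ^ (n * N)) * real (p ^ (n * M))))"
    by (rule sum_divide_distrib)
  also have "\<dots> = (\<Sum>y\<in>target p n. Pr p n N y * Pr p n M (gsub p n x y))"
    unfolding Pr_def by (rule sum.cong) simp_all
  finally show ?thesis .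
qed

lemma Pr_sum:
  assumes p: "p > 0"
  shows "(\<Sum>y\<in>target p n. Pr p n N y) = 1"
proof -
  have "(\<Sum>y\<in>target p n. Pr p n N y) = (\<Sum>y\<in>target p n. real (cnt p n N y)) / real (p ^ (n * N))"
    unfolding Pr_def by (rule sum_divide_distrib[symmetric])
  also have "(\<Sum>y\<in>target p n. real (cnt p n N y)) = real (p ^ (n * N))"
    using cnt_sum[OF p, of n N] by (simp only: of_nat_sum[symmetric])
  finally show ?thesis using p by simp
qed

lemma Pr_ge:
  assumes pp: "prime p" and z: "z \<in> target p n"
  shows "Pr p n ((p - 1) * p ^ n) z \<ge> 1 / real (p ^ (n * ((p - 1) * p ^ n)))"
proof -
  let ?m = "(p - 1) * p ^ n"
  obtain r where r: "r \<in> samples p n ?m" "Xvec p n ?m r = z" using target_surj[OF pp z] by blast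
  have fin: "finite {r \<in> samples p n ?m. Xvec p n ?m r = z}" using finite_samples by simp
  have "{r \<in> samples p n ?m. Xvec p n ?m r = z} \<noteq> {}" using r by blast
  then have "cnt p n ?m z \<ge> 1" unfolding cnt_def using fin by (simp add: Suc_le_eq card_gt_0_iff)
  then have "real (cnt p n ?m z) \<ge> 1" by simp
  then show ?thesis unfolding Pr_def by (simp add: divide_right_mono)
qed

lemma sums1:
  assumes p: "p > 0" and y: "y \<in> target p n"
  shows "(\<Sum>x\<in>target p n. K (gsub p n x y)) = (\<Sum>w\<in>target p n. K w)"
proof (rule sum.reindex_bij_witness[where i = "\<lambda>w. gadd p n y w" and j = "\<lambda>x. gsub p n x y"])
  fix a assume a: "a \<in> target p n"
  show "gadd p n y (gsub p n a y) = a" by (rule gadd_gsub[OF p a y])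
  show "gsub p n a y \<in> target p n" by (rule gsub_mem[OF p])
next
  fix b assume b: "b \<in> target p n"
  show "gsub p n (gadd p n y b) y = b" by (rule gsub_gadd[OF p b y])
  show "gadd p n y b \<in> target p n" by (rule gadd_mem[OF p])
qed simp

lemma sums2:
  assumes p: "p > 0" and x: "x \<in> target p n"
  shows "(\<Sum>y\<in>target p n. K (gsub p n x y)) = (\<Sum>w\<in>target p n. K w)"
proof (rule sum.reindex_bij_witness[where i = "\<lambda>w. gsub p n x w" and j = "\<lambda>y. gsub p n x y"])
  fix a assume a: "a \<in> target p n"
  show "gsub p n x (gsub p n x a) = a" by (rule gsub_gsub[OF p x a])
  show "gsub p n x a \<in> target p n" by (rule gsub_mem[OF p])
next
  fix b assume b: "b \<in> target p n"
  show "gsub p n x (gsub p n x b) = b" by (rule gsub_gsub[OF p x b])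
  show "gsub p n x b \<in> target p n" by (rule gsub_mem[OF p])
qed simp

theorem proposition2p9:
  fixes p n :: nat
  assumes "prime p" and "n \<ge> 1"
  shows "\<exists>c::real. c > 0 \<and> (\<exists>N0::nat. \<forall>N\<ge>N0. l1_dist p n N \<le> exp (- c * real N))"
proof -
  have pp: "prime p" by fact
  have p: "p > 0" using pp prime_gt_0_nat by blast
  have p2: "p \<ge> 2" using pp prime_ge_2_nat by blast
  define G where "G = target p n"
  define m where "m = (p - 1) * p ^ n"
  have m0: "m > 0" unfolding m_def using p2 by simp
  define \<delta> where "\<delta> = 1 / real (p ^ (n * m))"
  define \<theta> where "\<theta> = 1 - real (card G) * \<delta>"
  define u where "u = 1 / real (card G)"
  have finG: "finite G" unfolding G_def by (rule finite_target)
  have neG: "G \<noteq> {}" unfolding G_def by (rule target_ne[OF p])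
  have cG: "real (card G) > 0" using finG neG by (simp add: card_gt_0_iff)
  have dpos: "\<delta> > 0" unfolding \<delta>_def using p by simp
  have Kge: "\<And>z. z \<in> G \<Longrightarrow> Pr p n m z \<ge> \<delta>"
    unfolding \<delta>_def m_def G_def using Pr_ge[OF pp] by blast
  have Ksum: "\<And>y. y \<in> G \<Longrightarrow> (\<Sum>x\<in>G. Pr p n m (gsub p n x y)) = 1"
    unfolding G_def using sums1[OF p, where K="Pr p n m"] Pr_sum[OF p, of n m] by simp
  have Ksum2: "\<And>x. x \<in> G \<Longrightarrow> (\<Sum>y\<in>G. Pr p n m (gsub p n x y)) = 1"
    unfolding G_def using sums2[OF p, where K="Pr p n m"] Pr_sum[OF p, of n m] by simp
  have subG: "\<And>x y. x \<in> G \<Longrightarrow> y \<in> G \<Longrightarrow> gsub p n x y \<in> G"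
    unfolding G_def using gsub_mem[OF p] by blast
  define D where "D = (\<lambda>N. l1_dist p n N)"
  have Deq: "D N = (\<Sum>x\<in>G. \<bar>Pr p n N x - 1 / real (card G)\<bar>)" for N
    unfolding D_def G_def by (rule l1_eq[OF p])
  have step: "D (N + m) \<le> \<theta> * D N" for N
  proof -
    have conv: "\<And>x. x \<in> G \<Longrightarrow> Pr p n (N + m) x = (\<Sum>y\<in>G. Pr p n N y * Pr p n m (gsub p n x y))"
      unfolding G_def by (rule Pr_conv[OF p, of _ n N m])
    have fsum: "(\<Sum>y\<in>G. Pr p n N y) = 1" unfolding G_def by (rule Pr_sum[OF p])
    show ?thesis unfolding Deq \<theta>_def
      by (rule doeblin[where f="Pr p n N" and g="Pr p n (N + m)" and K="Pr p n m" and sub="gsub p n" and \<delta>=\<delta>,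
            OF finG neG conv subG Ksum Ksum2 Kge fsum])
  qed
  have th0: "\<theta> \<ge> 0"
  proof -
    obtain y0 where y0: "y0 \<in> G" using neG by blast
    have "(\<Sum>x\<in>G. \<delta>) \<le> (\<Sum>x\<in>G. Pr p n m (gsub p n x y0))"
      by (rule sum_mono) (use Kge subG y0 in blast)
    then have "real (card G) * \<delta> \<le> 1" using Ksum[OF y0] by simp
    then show ?thesis unfolding \<theta>_def by simp
  qed
  have th1: "\<theta> < 1" unfolding \<theta>_def using cG dpos by simp
  have Dle2: "D N \<le> 2" for N
  proof -
    have "D N \<le> (\<Sum>x\<in>G. Pr p n N x + 1 / real (card G))"
      unfolding Deq
    proof (rule sum_mono)
      fix x assume "x \<in> G"
      have "Pr p n N x \<ge> 0" unfolding Pr_def by simp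
      moreover have "1 / real (card G) \<ge> 0" by simp
      ultimately show "\<bar>Pr p n N x - 1 / real (card G)\<bar> \<le> Pr p n N x + 1 / real (card G)" by linarith
    qed
    also have "\<dots> = 2" using Pr_sum[OF p, of n N] cG unfolding G_def[symmetric]
      by (simp add: sum.distrib)
    finally show ?thesis .
  qed
  have iter: "D (r + q * m) \<le> 2 * \<theta> ^ q" for r q
  proof (induction q)
    case 0 then show ?case using Dle2 by simp
  next
    case (Suc q)
    have "D (r + Suc q * m) = D ((r + q * m) + m)" by (simp add: algebra_simps)
    also have "\<dots> \<le> \<theta> * D (r + q * m)" by (rule step)
    also have "\<dots> \<le> \<theta> * (2 * \<theta> ^ q)" using Suc th0 by (rule mult_left_mono)
    also have "\<dots> = 2 * \<theta> ^ Suc q" by simp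
    finally show ?case .
  qed
  have Dall: "D N \<le> 2 * \<theta> ^ (N div m)" for N
  proof -
    have e: "N mod m + (N div m) * m = N" by (rule mod_div_mult_eq)
    show ?thesis using iter[of "N mod m" "N div m"] unfolding e .
  qed
  have "\<exists>c>0. \<exists>N0. \<forall>N\<ge>N0. D N \<le> exp (- c * real N)"
    by (rule exp_bound[OF th0 th1 m0 Dall])
  then show ?thesis unfolding D_def by blast
qed



end
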